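(* Let $\kappa, m, n$ be positive integers and $s$ a nonnegative integer such that $\kappa^4 m^4 n^4 - 32\kappa(m^2+n^2) = s^2$. Let $\beta$ be a positive integer. If $\kappa^2 m^2 n^2 - s = 2\beta$, then $\kappa$ divides $\beta^2$ and \[ \beta^3 + 64 = (\beta\kappa m^2 - 8)(\beta\kappa n^2 - 8). \] If $\kappa^2 m^2 n^2 - s \geq 2\beta$, then $\beta^3 + 64 \geq (\beta\kappa m^2 - 8)(\beta\kappa n^2 - 8)$. *)

theory Defs
  imports Main
begin

end

theory Submission
  imports Defs
begin

theorem lemma2:
  fixes \<kappa> m n s \<beta> :: int
  assumes "\<kappa> > 0" and "m > 0" and "n > 0" and "s \<ge> 0"
    and "\<kappa>^4 * m^4 * n^4 - 32 * \<kappa> * (m^2 + n^2) = s^2"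
    and "\<beta> > 0"
  shows "(\<kappa>^2 * m^2 * n^2 - s = 2 * \<beta> \<longrightarrow>
            \<kappa> dvd \<beta>^2 \<and>
            \<beta>^3 + 64 = (\<beta> * \<kappa> * m^2 - 8) * (\<beta> * \<kappa> * n^2 - 8))
       \<and> (\<kappa>^2 * m^2 * n^2 - s \<ge> 2 * \<beta> \<longrightarrow>
            \<beta>^3 + 64 \<ge> (\<beta> * \<kappa> * m^2 - 8) * (\<beta> * \<kappa> * n^2 - 8))"
proof -
  define A where "A = \<kappa>^2 * m^2 * n^2"
  define C where "C = \<kappa> * (m^2 + n^2)"
  have sq: "A^2 - 32 * C = s^2" using assms(5) unfolding A_def C_def
    by (simp add: power_mult_distrib algebra_simps flip: power_mult)
  have key: "4 * (\<beta>^2 - A*\<beta> + 8*C) = (2*\<beta> - A + s) * (2*\<beta> - A - s)"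
    using sq by (simp add: algebra_simps power2_eq_square)
  have rhs: "(\<beta> * \<kappa> * m^2 - 8) * (\<beta> * \<kappa> * n^2 - 8) = \<beta>^2 * A - 8*\<beta>*C + 64"
    unfolding A_def C_def by (simp add: algebra_simps power2_eq_square)
  show ?thesis
  proof (intro conjI impI)
    assume h: "\<kappa>^2 * m^2 * n^2 - s = 2 * \<beta>"
    hence "2*\<beta> - A + s = 0" unfolding A_def by simp
    hence f: "\<beta>^2 - A*\<beta> + 8*C = 0" using key by simp
    hence "\<beta>^2 = \<kappa> * (\<kappa> * m^2 * n^2 * \<beta> - 8*(m^2+n^2))"
      unfolding A_def C_def by (simp add: algebra_simps power2_eq_square)
    thus "\<kappa> dvd \<beta>^2" by (metis dvd_triv_left)
    have "\<beta> * (\<beta>^2 - A*\<beta> + 8*C) = 0" using f by simp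
    hence "\<beta>^3 = \<beta> * (A*\<beta> - 8*C)"
      by (simp add: algebra_simps power2_eq_square power3_eq_cube)
    thus "\<beta>^3 + 64 = (\<beta> * \<kappa> * m^2 - 8) * (\<beta> * \<kappa> * n^2 - 8)"
      unfolding rhs by (simp add: algebra_simps power2_eq_square)
  next
    assume h: "\<kappa>^2 * m^2 * n^2 - s \<ge> 2 * \<beta>"
    hence a: "2*\<beta> - A + s \<le> 0" unfolding A_def by simp
    hence b: "2*\<beta> - A - s \<le> 0" using assms(4) by simp
    have "0 \<le> (2*\<beta> - A + s) * (2*\<beta> - A - s)" using a b
      by (simp add: mult_nonpos_nonpos)
    hence f: "0 \<le> \<beta>^2 - A*\<beta> + 8*C" using key by simp
    hence "0 \<le> \<beta> * (\<beta>^2 - A*\<beta> + 8*C)" using assms(6) by simp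
    thus "\<beta>^3 + 64 \<ge> (\<beta> * \<kappa> * m^2 - 8) * (\<beta> * \<kappa> * n^2 - 8)"
      unfolding rhs by (simp add: algebra_simps power2_eq_square power3_eq_cube)
  qed
qed

end
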